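(* Let $Q:\mathbb C\to\mathbb C$ be a polynomial of odd degree $2g+1$ with $2g$ distinct critical values, and let $f:\mathbb C\to\mathbb C$ be a diffeomorphism such that $Q(f(x))=Q(x)$ for all $x\in\mathbb C$. Then $f(x)=x$ for all $x$. *)

theory Defs
  imports "HOL-Analysis.Analysis" "HOL-Computational_Algebra.Polynomial"
begin

text \<open>C-infinity maps of the complex plane, viewed as the real plane R^2:
  a map is smooth iff it is (real-)Frechet differentiable everywhere and both of
  its partial derivatives (in directions 1 and i) are again smooth.\<close>
coinductive smooth_map :: "(complex \<Rightarrow> complex) \<Rightarrow> bool" where
  "(\<forall>x. g differentiable (at x)) \<Longrightarrow>
   smooth_map (\<lambda>x. frechet_derivative g (at x) 1) \<Longrightarrow>
   smooth_map (\<lambda>x. frechet_derivative g (at x) \<i>) \<Longrightarrow>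
   smooth_map g"

definition diffeomorphism_C :: "(complex \<Rightarrow> complex) \<Rightarrow> bool" where
  "diffeomorphism_C f \<longleftrightarrow> bij f \<and> smooth_map f \<and> smooth_map (inv f)"

definition critical_values :: "complex poly \<Rightarrow> complex set" where
  "critical_values Q = {poly Q z | z. poly (pderiv Q) z = 0}"

end

theory Submission
  imports Defs "HOL-Complex_Analysis.Complex_Analysis"
begin

lemma smooth_map_differentiable:
  assumes "smooth_map f" shows "f differentiable (at x)"
  using assms by (cases rule: smooth_map.cases) auto

lemma field_deriv_from_Q:
  fixes Q :: "complex poly" and f :: "complex \<Rightarrow> complex"
  assumes diff: "f differentiable (at z)"
    and eq: "\<And>x. poly Q (f x) = poly Q x"
    and nz: "poly (pderiv Q) (f z) \<noteq> 0"
  shows "(f has_field_derivative (poly (pderiv Q) z / poly (pderiv Q) (f z))) (at z)"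
proof -
  obtain D where D: "(f has_derivative D) (at z)"
    using diff unfolding differentiable_def by blast
  have PQ: "(poly Q has_derivative (\<lambda>h. poly (pderiv Q) (f z) * h)) (at (f z))"
    using poly_DERIV[of Q "f z"] unfolding has_field_derivative_def by simp
  have comp: "((poly Q \<circ> f) has_derivative (\<lambda>h. poly (pderiv Q) (f z) * D h)) (at z)"
    using has_derivative_compose[OF D PQ] by (simp add: o_def)
  have "poly Q \<circ> f = poly Q" using eq by (auto simp: fun_eq_iff)
  then have comp': "(poly Q has_derivative (\<lambda>h. poly (pderiv Q) (f z) * D h)) (at z)"
    using comp by simp
  have PQz: "(poly Q has_derivative (\<lambda>h. poly (pderiv Q) z * h)) (at z)"
    using poly_DERIV[of Q z] unfolding has_field_derivative_def by simp
  have "(\<lambda>h. poly (pderiv Q) (f z) * D h) = (\<lambda>h. poly (pderiv Q) z * h)"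
    using has_derivative_unique[OF comp' PQz] .
  then have Deq: "D = (*) (poly (pderiv Q) z / poly (pderiv Q) (f z))"
    using nz by (auto simp: fun_eq_iff field_simps dest: fun_cong)
  show ?thesis using D unfolding Deq has_field_derivative_def .
qed

lemma poly_growth:
  fixes Q :: "complex poly"
  assumes "degree Q \<ge> 1"
  obtains R where "R \<ge> 1" and
    "\<And>w. norm w \<ge> R \<Longrightarrow> norm (lead_coeff Q) / 2 * norm w ^ degree Q \<le> norm (poly Q w)"
    "\<And>w. norm w \<ge> R \<Longrightarrow> norm (poly Q w) \<le> 3 * norm (lead_coeff Q) / 2 * norm w ^ degree Q"
proof -
  let ?L = "lead_coeff Q"
  have L: "?L \<noteq> 0" using assms by auto
  have "((\<lambda>x. poly Q x / x ^ degree Q) \<longlongrightarrow> ?L) at_infinity"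
    by (rule poly_divide_tendsto_aux)
  then have "eventually (\<lambda>x. dist (poly Q x / x ^ degree Q) ?L < norm ?L / 2) at_infinity"
    using L by (intro tendstoD) auto
  then obtain b where b: "\<And>x. b \<le> norm x \<Longrightarrow> dist (poly Q x / x ^ degree Q) ?L < norm ?L / 2"
    unfolding eventually_at_infinity by blast
  define R where "R = max 1 b"
  show ?thesis
  proof
    show "R \<ge> 1" by (simp add: R_def)
  next
    fix w :: complex assume w: "norm w \<ge> R"
    then have w0: "w \<noteq> 0" "norm w > 0" by (auto simp: R_def)
    have d: "norm (poly Q w / w ^ degree Q - ?L) < norm ?L / 2"
      using b[of w] w by (auto simp: R_def dist_norm)
    have "norm (poly Q w / w ^ degree Q) \<ge> norm ?L - norm (poly Q w / w ^ degree Q - ?L)"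
      by (metis norm_minus_commute norm_triangle_ineq2 add_diff_cancel_left' diff_add_cancel)
    then have "norm (poly Q w / w ^ degree Q) \<ge> norm ?L / 2"
      using d by linarith
    then have "norm (poly Q w) / norm w ^ degree Q \<ge> norm ?L / 2"
      by (simp add: norm_divide norm_power)
    then show "norm ?L / 2 * norm w ^ degree Q \<le> norm (poly Q w)"
      using w0 by (simp add: field_simps)
  next
    fix w :: complex assume w: "norm w \<ge> R"
    then have w0: "w \<noteq> 0" "norm w > 0" by (auto simp: R_def)
    have d: "norm (poly Q w / w ^ degree Q - ?L) < norm ?L / 2"
      using b[of w] w by (auto simp: R_def dist_norm)
    have "norm (poly Q w / w ^ degree Q) \<le> norm ?L + norm (poly Q w / w ^ degree Q - ?L)"
      by (metis add.commute diff_add_cancel norm_triangle_ineq)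
    then have "norm (poly Q w / w ^ degree Q) \<le> 3 * norm ?L / 2"
      using d by linarith
    then have "norm (poly Q w) / norm w ^ degree Q \<le> 3 * norm ?L / 2"
      by (simp add: norm_divide norm_power)
    then show "norm (poly Q w) \<le> 3 * norm ?L / 2 * norm w ^ degree Q"
      using w0 by (simp add: field_simps)
  qed
qed

theorem mainTheorem8:
  fixes Q :: "complex poly" and g :: nat and f :: "complex \<Rightarrow> complex"
  assumes "degree Q = 2 * g + 1"
    and "finite (critical_values Q)" and "card (critical_values Q) = 2 * g"
    and "diffeomorphism_C f"
    and "\<And>x. poly Q (f x) = poly Q x"
  shows "\<forall>x. f x = x"
proof (cases "g = 0")
  case True
  then have deg: "degree Q = 1" using assms(1) by simp
  have pq: "poly Q x = coeff Q 0 + coeff Q 1 * x" for x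
    by (simp add: poly_altdef deg)
  have "Q \<noteq> 0" using deg by auto
  then have "coeff Q (degree Q) \<noteq> 0" by simp
  then have c1: "coeff Q 1 \<noteq> 0" using deg by simp
  show ?thesis
  proof
    fix x
    have "coeff Q 0 + coeff Q 1 * f x = coeff Q 0 + coeff Q 1 * x"
      using assms(5)[of x] by (simp add: pq)
    then show "f x = x" using c1 by simp
  qed
next
  case False
  then have g1: "g \<ge> 1" by simp
  have bij: "bij f" and sm: "smooth_map f"
    using assms(4) unfolding diffeomorphism_C_def by auto
  have inj: "inj f" using bij bij_is_inj by blast
  have diff: "\<And>x. f differentiable (at x)" using smooth_map_differentiable[OF sm] .
  define C where "C = {z. poly (pderiv Q) z = 0}"
  have pdnz: "pderiv Q \<noteq> 0" using assms(1) by (simp add: pderiv_eq_0_iff)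
  have finC: "finite C" unfolding C_def using pdnz poly_roots_finite by blast
  have cardC: "card C \<le> 2 * g" unfolding C_def
    using card_poly_roots_bound[OF pdnz] assms(1) by (simp add: degree_pderiv)
  have cv: "critical_values Q = poly Q ` C" unfolding critical_values_def C_def by auto
  have "card (poly Q ` C) \<le> card C" by (rule card_image_le[OF finC])
  then have cardC2: "card C = 2 * g" and "card (poly Q ` C) = card C"
    using cardC assms(3) cv by auto
  then have injQ: "inj_on (poly Q) C" using finC eq_card_imp_inj_on by blast
  have "card C \<ge> 2" using cardC2 g1 by simp
  then have "C \<noteq> {}" by auto
  then obtain c1 where c1: "c1 \<in> C" by auto
  have "card (C - {c1}) \<ge> 1" using \<open>card C \<ge> 2\<close> c1 finC by (simp add: card_Diff_singleton)
  then have "C - {c1} \<noteq> {}" by (cases "C - {c1} = {}") auto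
  then obtain c2 where "c2 \<in> C - {c1}" by auto
  then have c12: "c1 \<in> C" "c2 \<in> C" "c1 \<noteq> c2" using c1 by auto
  have cont: "continuous_on UNIV f"
    using diff by (simp add: continuous_at_imp_continuous_on differentiable_imp_continuous_within)
  have finK: "finite (f -` C)" using finite_vimageI[OF finC inj] .
  have "f holomorphic_on (UNIV - f -` C)"
  proof -
    have "\<forall>x\<in>UNIV - f -` C. \<exists>f'. (f has_field_derivative f') (at x)"
      using field_deriv_from_Q[OF diff assms(5)] by (auto simp: C_def)
    then show ?thesis by (simp add: holomorphic_on_open open_Diff finite_imp_closed finK)
  qed
  then have hol: "f holomorphic_on UNIV"
    using no_isolated_singularity[OF cont _ open_UNIV finK] by blast
  have degQ: "degree Q \<ge> 1" using assms(1) by simp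
  obtain R where R1: "R \<ge> 1"
    and lo: "\<And>w. norm w \<ge> R \<Longrightarrow> norm (lead_coeff Q) / 2 * norm w ^ degree Q \<le> norm (poly Q w)"
    and up: "\<And>w. norm w \<ge> R \<Longrightarrow> norm (poly Q w) \<le> 3 * norm (lead_coeff Q) / 2 * norm w ^ degree Q"
    using poly_growth[OF degQ] by blast
  have Lpos: "norm (lead_coeff Q) > 0" using degQ by auto
  have bound: "norm (f z) \<le> max 3 R * norm z ^ 1" if z: "R \<le> norm z" for z
  proof (cases "norm (f z) \<ge> R")
    case False
    have "R \<le> R * norm z" using z R1 by (simp add: mult_le_cancel_left1)
    then have "norm (f z) \<le> R * norm z" using False by linarith
    also have "\<dots> \<le> max 3 R * norm z" by (intro mult_right_mono) auto
    finally show ?thesis by simp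
  next
    case True
    have "norm (lead_coeff Q) / 2 * norm (f z) ^ degree Q \<le> 3 * norm (lead_coeff Q) / 2 * norm z ^ degree Q"
      using lo[OF True] up[OF z] assms(5)[of z] by simp
    then have A: "norm (f z) ^ degree Q \<le> 3 * norm z ^ degree Q"
      using Lpos by (simp add: field_simps)
    have "norm (f z) \<le> 3 * norm z"
    proof (rule ccontr)
      assume "\<not> ?thesis"
      then have "3 * norm z < norm (f z)" by simp
      then have "(3 * norm z) ^ degree Q < norm (f z) ^ degree Q"
        using degQ by (intro power_strict_mono) auto
      moreover have "3 * norm z ^ degree Q \<le> (3 * norm z) ^ degree Q"
      proof -
        have "(3::real) \<le> 3 ^ degree Q"
          using power_increasing[of 1 "degree Q" "3::real"] degQ by simp
        then show ?thesis by (simp add: power_mult_distrib mult_right_mono)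
      qed
      ultimately show False using A by simp
    qed
    also have "\<dots> \<le> max 3 R * norm z" by (intro mult_right_mono) auto
    finally show ?thesis by simp
  qed
  have aff: "f z = f 0 + deriv f 0 * z" for z
  proof -
    have "f z = (\<Sum>k\<le>1. (deriv^^k) f 0 / fact k * z ^ k)"
      by (rule Liouville_polynomial[OF hol bound])
    also have "\<dots> = f 0 + deriv f 0 * z"
      by (simp add: atMost_Suc)
    finally show ?thesis .
  qed
  define a where "a = deriv f 0"
  define b where "b = f 0"
  have fab: "f = (\<lambda>z. b + a * z)"
  proof (rule ext)
    fix z show "f z = b + a * z" unfolding a_def b_def by (rule aff)
  qed
  have a0: "a \<noteq> 0"
  proof
    assume "a = 0"
    then have "f c1 = f c2" by (simp add: fab)
    with inj c12 show False by (auto dest: injD)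
  qed
  have fixC: "f c = c" if c: "c \<in> C" for c
  proof -
    have e: "(\<lambda>z. poly Q (b + a * z)) = poly Q" using assms(5) by (auto simp: fab fun_eq_iff)
    have "((\<lambda>z. poly Q (b + a * z)) has_field_derivative poly (pderiv Q) (b + a * c) * a) (at c)"
    proof -
      have "((\<lambda>z. b + a * z) has_field_derivative a) (at c)"
        by (auto intro!: derivative_eq_intros)
      from DERIV_chain2[OF poly_DERIV this] show ?thesis .
    qed
    then have "(poly Q has_field_derivative poly (pderiv Q) (b + a * c) * a) (at c)" using e by simp
    then have "poly (pderiv Q) (b + a * c) * a = poly (pderiv Q) c"
      using DERIV_unique poly_DERIV by blast
    then have "f c \<in> C" using c a0 by (simp add: C_def fab)
    moreover have "poly Q (f c) = poly Q c" by (rule assms(5))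
    ultimately show ?thesis using injQ c by (auto dest: inj_onD)
  qed
  have "b + a * c1 = c1" "b + a * c2 = c2" using fixC c12 by (auto simp: fab)
  then have "a * (c1 - c2) = c1 - c2"
  proof -
    assume h: "b + a * c1 = c1" "b + a * c2 = c2"
    have "a * (c1 - c2) = (b + a * c1) - (b + a * c2)" by (simp add: algebra_simps)
    also have "\<dots> = c1 - c2" using h by simp
    finally show ?thesis .
  qed
  then have "a = 1" using c12 by simp
  then have "b = 0" using \<open>b + a * c1 = c1\<close> by simp
  show ?thesis using \<open>a = 1\<close> \<open>b = 0\<close> by (simp add: fab)
qed

end
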